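(* Let $T$ be a commutative ring with identity, $S$ a unital subring of $T$ and $I$ a non-zero nil ideal of $T$ such that $T=S+I$ and $S\cap I=\{0\}$. The following are equivalent: (1) $T$ is semi-complemented; (2) $T$ has Property $D$; (3) $S$ has Property $D$ and $I$ is a torsion-free $S$-module.
   Context: All rings are commutative with identity $\neq 0$. $\mathfrak{N}(R)$ is the nilradical and $\mathrm{reg}(R)$ the set of regular elements (non-zero-divisors) of $R$. An element $a$ is complemented if there is $b$ with $ab=0$ and $a+b\in\mathrm{reg}(R)$. $R$ is semi-complemented if every element of $R\setminus\mathfrak{N}(R)$ is complemented. $R$ has Property $D$ if $R\setminus\mathfrak{N}(R)=\mathrm{reg}(R)$. An ideal is nil if it consists of nilpotent elements. An $S$-module $M$ is torsion-free if $rm=0$ with $r\in\mathrm{reg}(S)$, $m\in M$ implies $m=0$. *)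

theory Defs
  imports Main
begin

text \<open>Notions relative to a (sub)ring given as a carrier set A inside a commutative ring 'a.
  For the ambient ring T take A = UNIV.\<close>

definition nilradical_in :: "'a::comm_ring_1 set \<Rightarrow> 'a set" where
  "nilradical_in A = {a \<in> A. \<exists>n::nat. a ^ n = 0}"

definition reg_in :: "'a::comm_ring_1 set \<Rightarrow> 'a set" where
  "reg_in A = {a \<in> A. \<forall>b\<in>A. a * b = 0 \<longrightarrow> b = 0}"

definition complemented_in :: "'a::comm_ring_1 set \<Rightarrow> 'a \<Rightarrow> bool" where
  "complemented_in A a \<longleftrightarrow> (\<exists>b\<in>A. a * b = 0 \<and> a + b \<in> reg_in A)"

definition semi_complemented_in :: "'a::comm_ring_1 set \<Rightarrow> bool" where
  "semi_complemented_in A \<longleftrightarrow> (\<forall>a \<in> A - nilradical_in A. complemented_in A a)"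

definition propD_in :: "'a::comm_ring_1 set \<Rightarrow> bool" where
  "propD_in A \<longleftrightarrow> A - nilradical_in A = reg_in A"

definition unital_subring :: "'a::comm_ring_1 set \<Rightarrow> bool" where
  "unital_subring S \<longleftrightarrow> 1 \<in> S \<and> (\<forall>x\<in>S. \<forall>y\<in>S. x + y \<in> S \<and> x - y \<in> S \<and> x * y \<in> S)"

definition is_ideal :: "'a::comm_ring_1 set \<Rightarrow> bool" where
  "is_ideal I \<longleftrightarrow> 0 \<in> I \<and> (\<forall>x\<in>I. \<forall>y\<in>I. x + y \<in> I) \<and> (\<forall>x\<in>I. \<forall>r. r * x \<in> I)"

definition nil_ideal :: "'a::comm_ring_1 set \<Rightarrow> bool" where
  "nil_ideal I \<longleftrightarrow> is_ideal I \<and> (\<forall>x\<in>I. \<exists>n::nat. x ^ n = 0)"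

definition torsion_free_over :: "'a::comm_ring_1 set \<Rightarrow> 'a set \<Rightarrow> bool" where
  "torsion_free_over S M \<longleftrightarrow> (\<forall>r\<in>reg_in S. \<forall>m\<in>M. r * m = 0 \<longrightarrow> m = 0)"

end

theory Submission
  imports Defs
begin

lemma reg_UNIV: "x \<in> reg_in UNIV \<longleftrightarrow> (\<forall>b. x * b = 0 \<longrightarrow> b = 0)"
  by (simp add: reg_in_def)

lemma nil_UNIV: "x \<in> nilradical_in UNIV \<longleftrightarrow> (\<exists>n. x ^ n = 0)"
  by (simp add: nilradical_in_def)

lemma reg_not_nil:
  fixes A :: "'a::comm_ring_1 set"
  assumes "1 \<in> A" "\<forall>x\<in>A. \<forall>y\<in>A. x * y \<in> A" "a \<in> A" "\<forall>b\<in>A. a * b = 0 \<longrightarrow> b = 0"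
  shows "a ^ n \<noteq> 0"
proof (induction n)
  case 0 then show ?case by simp
next
  case (Suc n)
  have "a ^ n \<in> A" by (induction n) (use assms in auto)
  then show ?case using Suc assms(4) by auto
qed

lemma reg_add_nil:
  fixes x y :: "'a::comm_ring_1"
  assumes x: "\<forall>b. x * b = 0 \<longrightarrow> b = 0" and y: "y ^ N = 0"
  shows "\<forall>b. (x + y) * b = 0 \<longrightarrow> b = 0"
proof (intro allI impI)
  fix b assume h: "(x + y) * b = 0"
  have step: "y ^ k * b = 0" if "y ^ Suc k * b = 0" for k
  proof -
    have "x * (y ^ k * b) = y ^ k * ((x + y) * b) - y ^ Suc k * b"
      by (simp add: algebra_simps)
    also have "\<dots> = 0" using h that by simp
    finally show ?thesis using x by blast
  qed
  have "\<forall>j\<le>N. y ^ (N - j) * b = 0"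
  proof (intro allI impI)
    fix j assume "j \<le> N"
    then show "y ^ (N - j) * b = 0"
    proof (induction j)
      case 0 then show ?case using y by simp
    next
      case (Suc j)
      then have "y ^ Suc (N - Suc j) * b = 0" by (simp add: Suc_diff_Suc)
      then show ?case by (rule step)
    qed
  qed
  then show "b = 0" by (metis diff_self_eq_0 le_refl mult_1 power_0)
qed

lemma regadd:
  fixes x y :: "'a::comm_ring_1"
  assumes "\<forall>b. x * b = 0 \<longrightarrow> b = 0" "y ^ N = 0"
  shows "x + y \<in> reg_in UNIV"
  using reg_add_nil[OF assms] unfolding reg_UNIV .

lemma nil_neg: "(x::'a::comm_ring_1) ^ n = 0 \<Longrightarrow> (- x) ^ n = 0"
proof -
  assume "x ^ n = 0"
  moreover have "(- x) ^ n = (- 1) ^ n * x ^ n" by (rule power_minus)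
  ultimately show ?thesis by simp
qed

locale SI =
  fixes S I :: "'a::comm_ring_1 set"
  assumes sub: "unital_subring S" and nil: "nil_ideal I" and nz: "I \<noteq> {0}"
    and dec: "\<forall>t. \<exists>s\<in>S. \<exists>i\<in>I. t = s + i" and disj: "S \<inter> I = {0}"
begin

lemma I_add: "x \<in> I \<Longrightarrow> y \<in> I \<Longrightarrow> x + y \<in> I"
  using nil by (simp add: nil_ideal_def is_ideal_def)
lemma I_mult: "x \<in> I \<Longrightarrow> r * x \<in> I"
  using nil by (simp add: nil_ideal_def is_ideal_def)
lemma I_mult2: "x \<in> I \<Longrightarrow> x * r \<in> I"
  using I_mult by (metis mult.commute)
lemma I_neg: "x \<in> I \<Longrightarrow> - x \<in> I"
  using I_mult[of x "-1"] by simp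
lemma I_nil: "x \<in> I \<Longrightarrow> \<exists>n. x ^ n = 0"
  using nil by (simp add: nil_ideal_def)
lemma S_mult: "x \<in> S \<Longrightarrow> y \<in> S \<Longrightarrow> x * y \<in> S"
  using sub by (simp add: unital_subring_def)
lemma S_one: "1 \<in> S"
  using sub by (simp add: unital_subring_def)
lemma S_pow: "x \<in> S \<Longrightarrow> x ^ n \<in> S"
  by (induction n) (auto intro: S_mult S_one)

lemma SI_zero: "s \<in> S \<Longrightarrow> i \<in> I \<Longrightarrow> s + i = 0 \<Longrightarrow> s = 0"
proof -
  assume a: "s \<in> S" "i \<in> I" "s + i = 0"
  then have "s = - i" by (simp add: eq_neg_iff_add_eq_0)
  then have "s \<in> I" using I_neg a by simp
  then show "s = 0" using a disj by blast
qed

lemma pow_dec: "s \<in> S \<Longrightarrow> i \<in> I \<Longrightarrow> (s + i) ^ n - s ^ n \<in> I"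
proof (induction n)
  case 0
  then show ?case using I_mult[of i 0] by simp
next
  case (Suc n)
  define d where "d = (s + i) ^ n - s ^ n"
  have "(s + i) ^ Suc n - s ^ Suc n = s ^ n * i + (s + i) * d"
    by (simp add: d_def algebra_simps)
  moreover have "d \<in> I" using Suc d_def by simp
  ultimately show ?case using Suc I_add I_mult by (metis mult.commute)
qed

lemma nilp: "s \<in> S \<Longrightarrow> i \<in> I \<Longrightarrow> (\<exists>n. (s + i) ^ n = 0) \<longleftrightarrow> (\<exists>n. s ^ n = 0)"
proof
  assume a: "s \<in> S" "i \<in> I" and "\<exists>n. (s + i) ^ n = 0"
  then obtain n where n: "(s + i) ^ n = 0" by blast
  have "s ^ n + ((s + i) ^ n - s ^ n) = 0" using n by simp
  then have "s ^ n = 0" using SI_zero[OF S_pow[OF a(1)] pow_dec[OF a]] by blast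
  then show "\<exists>n. s ^ n = 0" by blast
next
  assume a: "s \<in> S" "i \<in> I" and "\<exists>n. s ^ n = 0"
  then obtain n where n: "s ^ n = 0" by blast
  have "(s + i) ^ n \<in> I" using pow_dec[OF a, of n] n by simp
  then obtain k where "((s + i) ^ n) ^ k = 0" using I_nil by blast
  then show "\<exists>n. (s + i) ^ n = 0" by (metis power_mult)
qed

lemma prod_S: "s1 \<in> S \<Longrightarrow> i1 \<in> I \<Longrightarrow> s2 \<in> S \<Longrightarrow> i2 \<in> I \<Longrightarrow> (s1 + i1) * (s2 + i2) = 0
   \<Longrightarrow> s1 * s2 = 0"
proof -
  assume a: "s1 \<in> S" "i1 \<in> I" "s2 \<in> S" "i2 \<in> I" "(s1 + i1) * (s2 + i2) = 0"
  have "s1 * s2 + (s1 * i2 + i1 * (s2 + i2)) = 0" using a(5) by (simp add: algebra_simps)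
  moreover have "s1 * i2 + i1 * (s2 + i2) \<in> I" using a I_add I_mult I_mult2 by blast
  ultimately show ?thesis using SI_zero S_mult a by blast
qed

lemma step1:
  assumes sc: "semi_complemented_in (UNIV::'a set)"
    and s: "s \<in> S" "\<not> (\<exists>k. s ^ k = 0)" and n: "n \<in> I" "s * n = 0"
  shows "n = 0"
proof -
  define x where "x = s + n"
  have "\<not> (\<exists>k. x ^ k = 0)" using nilp[OF s(1) n(1)] s x_def by blast
  then have "complemented_in UNIV x" using sc
    by (simp add: semi_complemented_in_def nil_UNIV)
  then obtain y where y: "x * y = 0" "x + y \<in> reg_in UNIV"
    by (auto simp: complemented_in_def)
  obtain s2 m where sm: "s2 \<in> S" "m \<in> I" "y = s2 + m" using dec by blast
  have ss2: "s * s2 = 0" using prod_S[OF s(1) n(1) sm(1) sm(2)] y(1) x_def sm(3) by simp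
  have "s2 * (x * y) = 0" using y by simp
  then have "s2 * s * y + s2 * n * y = 0" by (simp add: x_def algebra_simps)
  then have s2ny: "s2 * n * y = 0" using ss2 by (simp add: mult.commute)
  then have s2sq: "s2 * s2 * n = - (s2 * n * m)" using sm(3)
    by (simp add: algebra_simps eq_neg_iff_add_eq_0)
  define q where "q = s + s2"
  have "n + m \<in> I" using n sm I_add by blast
  then obtain N where "(n + m) ^ N = 0" using I_nil by blast
  then have "(- (n + m)) ^ N = 0" by (rule nil_neg)
  moreover have "q = (x + y) + (- (n + m))" by (simp add: q_def x_def sm(3))
  moreover have "\<forall>b. (x + y) * b = 0 \<longrightarrow> b = 0" using y(2) unfolding reg_UNIV .
  ultimately have qreg: "\<forall>b. q * b = 0 \<longrightarrow> b = 0"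
    using reg_add_nil by simp
  have A: "s2 ^ Suc k * n = (-1) ^ k * s2 * n * m ^ k" for k
  proof (induction k)
    case 0 then show ?case by simp
  next
    case (Suc k)
    have "s2 ^ Suc (Suc k) * n = s2 * (s2 ^ Suc k * n)" by (simp add: algebra_simps)
    also have "\<dots> = (-1) ^ k * (s2 * s2 * n) * m ^ k" using Suc by (simp add: algebra_simps)
    also have "\<dots> = (-1) ^ Suc k * s2 * n * m ^ Suc k" using s2sq by (simp add: algebra_simps)
    finally show ?case .
  qed
  have B: "q ^ Suc k * n = s2 ^ Suc k * n" for k
  proof (induction k)
    case 0 then show ?case using n(2) by (simp add: q_def algebra_simps)
  next
    case (Suc k)
    have "q ^ Suc (Suc k) * n = q * (q ^ Suc k * n)" by (simp add: algebra_simps)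
    also have "\<dots> = s * s2 * (s2 ^ k * n) + s2 ^ Suc (Suc k) * n"
      using Suc by (simp add: q_def algebra_simps)
    also have "\<dots> = s2 ^ Suc (Suc k) * n" using ss2 by simp
    finally show ?case .
  qed
  obtain M where M: "m ^ M = 0" using I_nil sm(2) by blast
  have "q ^ Suc M * n = 0" using A[of M] B[of M] M by simp
  moreover have "q ^ k * n = 0 \<Longrightarrow> n = 0" for k
  proof (induction k)
    case 0 then show ?case by simp
  next
    case (Suc k)
    then have "q * (q ^ k * n) = 0" by (simp add: algebra_simps)
    then show ?case using qreg Suc by blast
  qed
  ultimately show ?thesis by blast
qed

lemma step2:
  assumes sc: "semi_complemented_in (UNIV::'a set)"
    and s: "s \<in> S" "\<not> (\<exists>k. s ^ k = 0)"
  shows "\<forall>b. s * b = 0 \<longrightarrow> b = 0"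
proof -
  have "complemented_in UNIV s" using sc s
    by (simp add: semi_complemented_in_def nil_UNIV)
  then obtain y where y: "s * y = 0" "s + y \<in> reg_in UNIV"
    by (auto simp: complemented_in_def)
  obtain s2 m where sm: "s2 \<in> S" "m \<in> I" "y = s2 + m" using dec by blast
  have "0 \<in> I" using nil by (simp add: nil_ideal_def is_ideal_def)
  then have ss2: "s * s2 = 0" using prod_S[OF s(1) _ sm(1) sm(2), of 0] y(1) sm(3) by simp
  have s2nil: "\<exists>k. s2 ^ k = 0"
  proof (rule ccontr)
    assume nn: "\<not> (\<exists>k. s2 ^ k = 0)"
    obtain j where j: "j \<in> I" "j \<noteq> 0" using nz \<open>0 \<in> I\<close> by blast
    have "s2 * j \<in> I" using j I_mult by blast
    moreover have "s * (s2 * j) = 0" using ss2 by (simp add: mult.assoc[symmetric])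
    ultimately have "s2 * j = 0" using step1[OF sc s] by blast
    then have "j = 0" using step1[OF sc sm(1) nn j(1)] by blast
    then show False using j by simp
  qed
  then obtain N where "y ^ N = 0" using nilp[OF sm(1) sm(2)] sm(3) by blast
  then have "(- y) ^ N = 0" by (rule nil_neg)
  moreover have "\<forall>b. (s + y) * b = 0 \<longrightarrow> b = 0" using y(2) unfolding reg_UNIV .
  ultimately have "\<forall>b. ((s + y) + (- y)) * b = 0 \<longrightarrow> b = 0" using reg_add_nil[of "s + y" "- y"] by blast
  then show ?thesis by simp
qed

lemma reg_nonnil: "(\<forall>b. (a::'a) * b = 0 \<longrightarrow> b = 0) \<Longrightarrow> \<not> (\<exists>k. a ^ k = 0)"
  using reg_not_nil[of UNIV a] by auto

lemma sc_D: "semi_complemented_in (UNIV::'a set) \<Longrightarrow> propD_in (UNIV::'a set)"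
  unfolding propD_in_def
proof (intro equalityI subsetI)
  fix a :: 'a assume sc: "semi_complemented_in (UNIV::'a set)" and a: "a \<in> UNIV - nilradical_in UNIV"
  obtain s i where si: "s \<in> S" "i \<in> I" "a = s + i" using dec by blast
  have "\<not> (\<exists>k. s ^ k = 0)" using a si nilp[OF si(1) si(2)] nil_UNIV by blast
  then have "\<forall>b. s * b = 0 \<longrightarrow> b = 0" using step2[OF sc si(1)] by blast
  moreover obtain N where "i ^ N = 0" using I_nil si(2) by blast
  ultimately show "a \<in> reg_in UNIV" using regadd si(3) by simp
next
  fix a :: 'a assume "a \<in> reg_in UNIV"
  then show "a \<in> UNIV - nilradical_in UNIV" using reg_nonnil reg_UNIV nil_UNIV by blast
qed

lemma D_sc: "propD_in (UNIV::'a set) \<Longrightarrow> semi_complemented_in (UNIV::'a set)"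
  unfolding propD_in_def semi_complemented_in_def complemented_in_def
proof (intro ballI)
  fix a :: 'a assume D: "(UNIV::'a set) - nilradical_in UNIV = reg_in UNIV" and a: "a \<in> UNIV - nilradical_in UNIV"
  have "a \<in> reg_in UNIV" using a unfolding D .
  then show "\<exists>b\<in>UNIV. a * b = 0 \<and> a + b \<in> reg_in UNIV" by (intro bexI[of _ 0]) simp_all
qed

lemma D_3: "propD_in (UNIV::'a set) \<Longrightarrow> propD_in S \<and> torsion_free_over S I"
proof -
  assume D: "propD_in (UNIV::'a set)"
  have D': "\<forall>b. a * b = 0 \<longrightarrow> b = 0" if "\<not> (\<exists>k. a ^ k = 0)" for a :: 'a
  proof -
    have "a \<in> UNIV - nilradical_in UNIV" using that by (simp add: nil_UNIV)
    then have "a \<in> reg_in UNIV" using D unfolding propD_in_def by simp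
    then show ?thesis unfolding reg_UNIV .
  qed
  have rS: "\<not> (\<exists>k. a ^ k = 0)" if "a \<in> reg_in S" for a
  proof -
    have h: "a \<in> S" "\<forall>b\<in>S. a * b = 0 \<longrightarrow> b = 0" using that unfolding reg_in_def by simp_all
    have c: "\<forall>x\<in>S. \<forall>y\<in>S. x * y \<in> S" using S_mult by blast
    have "a ^ k \<noteq> 0" for k using reg_not_nil[OF S_one c h] .
    then show ?thesis by blast
  qed
  have "propD_in S"
    unfolding propD_in_def
  proof (intro equalityI subsetI)
    fix a assume a: "a \<in> S - nilradical_in S"
    then have h: "a \<in> S" "\<not> (\<exists>k. a ^ k = 0)" unfolding nilradical_in_def by simp_all
    have "\<forall>b. a * b = 0 \<longrightarrow> b = 0" using D' h(2) by blast
    then show "a \<in> reg_in S" using h(1) by (simp add: reg_in_def)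
  next
    fix a assume a: "a \<in> reg_in S"
    then have "a \<in> S" unfolding reg_in_def by simp
    moreover have "\<not> (\<exists>k. a ^ k = 0)" using rS[OF a] .
    ultimately show "a \<in> S - nilradical_in S" unfolding nilradical_in_def by blast
  qed
  moreover have "torsion_free_over S I"
    unfolding torsion_free_over_def
  proof (intro ballI impI)
    fix r m assume r: "r \<in> reg_in S" "m \<in> I" "r * m = 0"
    have "\<forall>b. r * b = 0 \<longrightarrow> b = 0" using D'[OF rS[OF r(1)]] .
    then show "m = 0" using r(3) by blast
  qed
  ultimately show ?thesis by simp
qed

lemma three_D: "propD_in S \<Longrightarrow> torsion_free_over S I \<Longrightarrow> propD_in (UNIV::'a set)"
  unfolding propD_in_def
proof (intro equalityI subsetI)
  fix a :: 'a assume DS: "S - nilradical_in S = reg_in S" and tf: "torsion_free_over S I"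
    and a: "a \<in> UNIV - nilradical_in UNIV"
  obtain s i where si: "s \<in> S" "i \<in> I" "a = s + i" using dec by blast
  have "\<not> (\<exists>k. a ^ k = 0)" using a by (simp add: nil_UNIV)
  then have "\<not> (\<exists>k. s ^ k = 0)" using si nilp[OF si(1) si(2)] by simp
  then have "s \<in> S - nilradical_in S" using si(1) unfolding nilradical_in_def by simp
  then have sr: "s \<in> reg_in S" using DS by simp
  then have srr: "\<forall>b\<in>S. s * b = 0 \<longrightarrow> b = 0" unfolding reg_in_def by simp
  have tf': "\<forall>m\<in>I. s * m = 0 \<longrightarrow> m = 0" using tf sr unfolding torsion_free_over_def by simp
  have "\<forall>b. s * b = 0 \<longrightarrow> b = 0"
  proof (intro allI impI)
    fix b assume b: "s * b = 0"
    obtain s2 m where sm: "s2 \<in> S" "m \<in> I" "b = s2 + m" using dec by blast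
    have "0 \<in> I" using nil by (simp add: nil_ideal_def is_ideal_def)
    then have "s * s2 = 0" using prod_S[OF si(1) _ sm(1) sm(2), of 0] b sm(3) by simp
    then have s20: "s2 = 0" using srr sm(1) by simp
    then have "s * m = 0" using b sm(3) by simp
    then have "m = 0" using tf' sm(2) by simp
    then show "b = 0" using sm(3) s20 by simp
  qed
  moreover obtain N where "i ^ N = 0" using I_nil si(2) by blast
  ultimately show "a \<in> reg_in UNIV" using regadd si(3) by simp
next
  fix a :: 'a assume "a \<in> reg_in UNIV"
  then have "\<forall>b. a * b = 0 \<longrightarrow> b = 0" unfolding reg_UNIV .
  then have "\<not> (\<exists>k. a ^ k = 0)" by (rule reg_nonnil)
  then show "a \<in> UNIV - nilradical_in UNIV" by (simp add: nil_UNIV)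
qed

end

theorem mainTheorem2:
  fixes S I :: "'a::comm_ring_1 set"
  assumes "unital_subring S"
    and "nil_ideal I" and "I \<noteq> {0}"
    and "\<forall>t. \<exists>s\<in>S. \<exists>i\<in>I. t = s + i"
    and "S \<inter> I = {0}"
  shows "(semi_complemented_in (UNIV::'a set) \<longleftrightarrow> propD_in (UNIV::'a set))
       \<and> (propD_in (UNIV::'a set) \<longleftrightarrow> (propD_in S \<and> torsion_free_over S I))"
proof -
  interpret SI S I using assms by (unfold_locales) auto
  have 1: "semi_complemented_in (UNIV::'a set) \<longleftrightarrow> propD_in (UNIV::'a set)"
    using sc_D D_sc by (rule iffI)
  have 2: "propD_in (UNIV::'a set) \<longleftrightarrow> (propD_in S \<and> torsion_free_over S I)"
  proof
    assume "propD_in (UNIV::'a set)" then show "propD_in S \<and> torsion_free_over S I" by (rule D_3)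
  next
    assume "propD_in S \<and> torsion_free_over S I"
    then show "propD_in (UNIV::'a set)" using three_D by blast
  qed
  show ?thesis using 1 2 by (rule conjI)
qed

end
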